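(* Let $p\ge 1$ be odd and $q\ge 2$, and let $R_p(p,q)$ be the prolate rectangle-shaped hexagonal system with parameters $p,q$. Then $$cf(R_p(p,q))=\frac{p+1}{2}\,(q+1).$$
   Context: A hexagonal system (HS) is a finite 2-connected plane graph in which every interior face is a regular hexagon of the hexagonal lattice; it is drawn with some edges vertical, so that hexagons form horizontal rows in which consecutive hexagons share a vertical edge. $R_p(p,q)$ has $p$ horizontal rows (numbered $1,\ldots,p$ from bottom to top, $p$ odd): each odd-numbered row is a linear chain of $q$ hexagons and each even-numbered row is a linear chain of $q-1$ hexagons, consecutive rows are stacked in the hexagonal lattice, and every even row is inset half a hexagon from both ends of the adjacent odd rows (so all odd rows are vertically aligned with each other). For example $R_p(3,2)$ is perylene. For a perfect matching $M$, a forcing set of $M$ is a subset of $M$ contained in no other perfect matching; a complete forcing set of $G$ is a set $S\subseteq E(G)$ with $S\cap M$ a forcing set of $M$ for every perfect matching $M$; $cf(G)$ is the minimum size of a complete forcing set. *)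

theory Defs
  imports Main
begin

text \<open>Graphs are given by a vertex set V and a set E of edges, each edge a
2-element set of vertices.\<close>

definition perfect_matching :: "'v set \<Rightarrow> 'v set set \<Rightarrow> 'v set set \<Rightarrow> bool" where
  "perfect_matching V E M \<longleftrightarrow> M \<subseteq> E \<and> (\<forall>v\<in>V. \<exists>!e. e \<in> M \<and> v \<in> e)"

definition forcing_set :: "'v set \<Rightarrow> 'v set set \<Rightarrow> 'v set set \<Rightarrow> 'v set set \<Rightarrow> bool" where
  "forcing_set V E M S \<longleftrightarrow> S \<subseteq> M \<and>
     (\<forall>M'. perfect_matching V E M' \<and> S \<subseteq> M' \<longrightarrow> M' = M)"

definition complete_forcing_set :: "'v set \<Rightarrow> 'v set set \<Rightarrow> 'v set set \<Rightarrow> bool" where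
  "complete_forcing_set V E S \<longleftrightarrow> S \<subseteq> E \<and>
     (\<forall>M. perfect_matching V E M \<longrightarrow> forcing_set V E M (S \<inter> M))"

definition cf :: "'v set \<Rightarrow> 'v set set \<Rightarrow> nat" where
  "cf V E = (LEAST n. \<exists>S. complete_forcing_set V E S \<and> card S = n)"

text \<open>Hexagonal lattice in brick-wall coordinates: the hexagon with lower-left
corner (a,j) (where a+j is even) has vertices (a..a+2, j) and (a..a+2, j+1),
four horizontal edges and two vertical edges {(a,j),(a,j+1)}, {(a+2,j),(a+2,j+1)}.
Hexagons in the same horizontal row with corners a and a+2 share a vertical edge;
the row above is shifted by one unit (= half a hexagon).\<close>

definition hex_verts :: "int \<Rightarrow> int \<Rightarrow> (int \<times> int) set" where
  "hex_verts a j = {(a,j),(a+1,j),(a+2,j),(a,j+1),(a+1,j+1),(a+2,j+1)}"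

definition hex_edges :: "int \<Rightarrow> int \<Rightarrow> (int \<times> int) set set" where
  "hex_edges a j = {{(a,j),(a+1,j)}, {(a+1,j),(a+2,j)},
                    {(a,j+1),(a+1,j+1)}, {(a+1,j+1),(a+2,j+1)},
                    {(a,j),(a,j+1)}, {(a+2,j),(a+2,j+1)}}"

text \<open>Hexagons (lower-left corners) of R_p(p,q): rows r = 0..p-1 (row r+1 in the
paper's numbering).\<close>
definition Rp_hexagons :: "nat \<Rightarrow> nat \<Rightarrow> (int \<times> int) set" where
  "Rp_hexagons p q =
     {(2 * int k, int r) | r k. r < p \<and> even r \<and> k < q} \<union>
     {(2 * int k + 1, int r) | r k. r < p \<and> odd r \<and> k + 1 < q}"

definition Rp_verts :: "nat \<Rightarrow> nat \<Rightarrow> (int \<times> int) set" where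
  "Rp_verts p q = (\<Union>(a,j)\<in>Rp_hexagons p q. hex_verts a j)"

definition Rp_edges :: "nat \<Rightarrow> nat \<Rightarrow> (int \<times> int) set set" where
  "Rp_edges p q = (\<Union>(a,j)\<in>Rp_hexagons p q. hex_edges a j)"

end

theory Submission
  imports Defs
begin


definition V0 :: "nat \<Rightarrow> nat \<Rightarrow> (int \<times> int) set" where
  "V0 p q = {(x,y). 0 \<le> x \<and> x \<le> 2 * int q \<and> 0 \<le> y \<and> y \<le> int p}"

definition hh :: "int \<Rightarrow> int \<Rightarrow> (int \<times> int) set" where
  "hh x y = {(x,y),(x+1,y)}"
definition vv :: "int \<Rightarrow> int \<Rightarrow> (int \<times> int) set" where
  "vv x y = {(x,y),(x,y+1)}"

definition E0 :: "nat \<Rightarrow> nat \<Rightarrow> (int \<times> int) set set" where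
  "E0 p q = {hh x y | x y. 0 \<le> x \<and> x < 2 * int q \<and> 0 \<le> y \<and> y \<le> int p}
          \<union> {vv x y | x y. 0 \<le> x \<and> x \<le> 2 * int q \<and> 0 \<le> y \<and> y < int p \<and> even (x + y)}"

lemma hh_eq_iff[simp]: "hh a b = hh c d \<longleftrightarrow> a = c \<and> b = d"
  unfolding hh_def by (auto simp: doubleton_eq_iff)
lemma vv_eq_iff[simp]: "vv a b = vv c d \<longleftrightarrow> a = c \<and> b = d"
  unfolding vv_def by (auto simp: doubleton_eq_iff)
lemma hh_vv_neq[simp]: "hh a b \<noteq> vv c d" "vv c d \<noteq> hh a b"
  unfolding vv_def hh_def by (auto simp: doubleton_eq_iff)

lemma hh_E0: "hh x y \<in> E0 p q \<longleftrightarrow> 0 \<le> x \<and> x < 2 * int q \<and> 0 \<le> y \<and> y \<le> int p"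
  unfolding E0_def by auto
lemma vv_E0: "vv x y \<in> E0 p q \<longleftrightarrow> 0 \<le> x \<and> x \<le> 2 * int q \<and> 0 \<le> y \<and> y < int p \<and> even (x + y)"
  unfolding E0_def by auto

lemma mem_hh: "(a,b) \<in> hh x y \<longleftrightarrow> b = y \<and> (a = x \<or> a = x + 1)"
  unfolding hh_def by auto
lemma mem_vv: "(a,b) \<in> vv x y \<longleftrightarrow> a = x \<and> (b = y \<or> b = y + 1)"
  unfolding vv_def by auto

lemma E0_cases:
  assumes "e \<in> E0 p q" "(x,y) \<in> e"
  shows "e = hh (x-1) y \<or> e = hh x y \<or> e = vv x (y-1) \<or> e = vv x y"
  using assms unfolding E0_def by (auto simp: mem_hh mem_vv)

lemma Rp_verts_eq:
  assumes "odd p" "q \<ge> 2"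
  shows "Rp_verts p q = V0 p q"
proof
  show "Rp_verts p q \<subseteq> V0 p q"
    unfolding Rp_verts_def Rp_hexagons_def V0_def hex_verts_def by auto
next
  show "V0 p q \<subseteq> Rp_verts p q"
  proof
    fix v assume "v \<in> V0 p q"
    then obtain x y where v: "v = (x,y)" "0 \<le> x" "x \<le> 2 * int q" "0 \<le> y" "y \<le> int p"
      unfolding V0_def by auto
    define r where "r = (if even y then y else y - 1)"
    define k where "k = min (x div 2) (int q - 1)"
    have r: "0 \<le> r" "r < int p" "even r" "r \<le> y" "y \<le> r + 1"
      using v assms unfolding r_def by (auto, presburger+)
    have k: "0 \<le> k" "k < int q" "2*k \<le> x" "x \<le> 2*k+2"
    proof -
      have "2 * (x div 2) \<le> x" "x \<le> 2 * (x div 2) + 1" by presburger+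
      then show "0 \<le> k" "k < int q" "2*k \<le> x" "x \<le> 2*k+2"
        using v assms unfolding k_def min_def by auto
    qed
    have "(2 * k, r) \<in> Rp_hexagons p q"
      unfolding Rp_hexagons_def
      apply (rule UnI1, simp)
      apply (rule exI[of _ "nat r"], rule exI[of _ "nat k"])
      using r k by (auto simp: even_nat_iff)
    moreover have "v \<in> hex_verts (2*k) r"
      unfolding hex_verts_def using v r k by auto
    ultimately show "v \<in> Rp_verts p q" unfolding Rp_verts_def by blast
  qed
qed

lemma hex_edges_eq: "hex_edges a j = {hh a j, hh (a+1) j, hh a (j+1), hh (a+1) (j+1), vv a j, vv (a+2) j}"
  unfolding hex_edges_def hh_def vv_def by (simp add: add.assoc)

lemma Rp_edges_eq:
  assumes "odd p" "q \<ge> 2"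
  shows "Rp_edges p q = E0 p q"
proof
  show "Rp_edges p q \<subseteq> E0 p q"
    unfolding Rp_edges_def Rp_hexagons_def hex_edges_eq
    by (auto simp: hh_E0 vv_E0 even_nat_iff)
next
  show "E0 p q \<subseteq> Rp_edges p q"
  proof
    fix e assume "e \<in> E0 p q"
    then consider (h) x y where "e = hh x y" "0 \<le> x" "x < 2 * int q" "0 \<le> y" "y \<le> int p"
      | (v) x y where "e = vv x y" "0 \<le> x" "x \<le> 2 * int q" "0 \<le> y" "y < int p" "even (x+y)"
      unfolding E0_def by auto
    then show "e \<in> Rp_edges p q"
    proof cases
      case h
      define r where "r = (if even y then y else y - 1)"
      define k where "k = x div 2"
      have r: "0 \<le> r" "r < int p" "even r" "y = r \<or> y = r + 1"
        using h assms unfolding r_def by (auto, presburger+)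
      have k: "0 \<le> k" "k < int q" "x = 2*k \<or> x = 2*k+1"
        using h assms unfolding k_def by presburger+
      have "(2 * k, r) \<in> Rp_hexagons p q"
        unfolding Rp_hexagons_def
        apply (rule UnI1, simp)
        apply (rule exI[of _ "nat r"], rule exI[of _ "nat k"])
        using r k by (auto simp: even_nat_iff)
      moreover have "e \<in> hex_edges (2*k) r"
        unfolding hex_edges_eq using h r k by auto
      ultimately show ?thesis unfolding Rp_edges_def by blast
    next
      case v
      show ?thesis
      proof (cases "even y")
        case True
        define k where "k = min (x div 2) (int q - 1)"
        have k: "0 \<le> k" "k < int q" "x = 2*k \<or> x = 2*k+2"
        proof -
          have "even x" using True v by presburger
          then have "x = 2 * (x div 2)" by presburger
          then show "0 \<le> k" "k < int q" "x = 2*k \<or> x = 2*k+2"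
            using v assms unfolding k_def min_def by (auto split: if_splits)
        qed
        have "(2 * k, y) \<in> Rp_hexagons p q"
          unfolding Rp_hexagons_def
          apply (rule UnI1, simp)
          apply (rule exI[of _ "nat y"], rule exI[of _ "nat k"])
          using v k True by (auto simp: even_nat_iff)
        moreover have "e \<in> hex_edges (2*k) y"
          unfolding hex_edges_eq using v k by auto
        ultimately show ?thesis unfolding Rp_edges_def by blast
      next
        case False
        define k where "k = min ((x - 1) div 2) (int q - 2)"
        have k: "0 \<le> k" "k + 1 < int q" "x = 2*k+1 \<or> x = 2*k+3"
        proof -
          have "odd x" using False v by presburger
          then have "x = 2 * ((x - 1) div 2) + 1" by presburger
          moreover have "x \<noteq> 2 * int q" using \<open>odd x\<close> by presburger
          moreover have "x \<noteq> 0" using \<open>odd x\<close> by presburger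
          ultimately show "0 \<le> k" "k + 1 < int q" "x = 2*k+1 \<or> x = 2*k+3"
            using v assms unfolding k_def min_def by (auto split: if_splits)
        qed
        have "(2 * k + 1, y) \<in> Rp_hexagons p q"
          unfolding Rp_hexagons_def
          apply (rule UnI2, simp)
          apply (rule exI[of _ "nat y"], rule exI[of _ "nat k"])
          using v k False by (auto simp: even_nat_iff)
        moreover have "e \<in> hex_edges (2*k+1) y"
          unfolding hex_edges_eq using v k by (auto simp: algebra_simps)
        ultimately show ?thesis unfolding Rp_edges_def by blast
      qed
    qed
  qed
qed




lemma pm_unique:
  assumes "perfect_matching V E M" "v \<in> V" "e \<in> M" "e' \<in> M" "v \<in> e" "v \<in> e'"
  shows "e = e'"
  using assms unfolding perfect_matching_def by blast

lemma pm_exists: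
  assumes "perfect_matching V E M" "v \<in> V"
  shows "\<exists>e\<in>M. v \<in> e"
  using assms unfolding perfect_matching_def by blast

lemma pm_sub: "perfect_matching V E M \<Longrightarrow> M \<subseteq> E"
  unfolding perfect_matching_def by blast

definition U :: "(int \<times> int) set set \<Rightarrow> int \<Rightarrow> int set" where
  "U M y = {x. vv x y \<in> M}"
definition Hs :: "(int \<times> int) set set \<Rightarrow> int \<Rightarrow> int set" where
  "Hs M y = {x. hh x y \<in> M}"

lemma V0_mem[simp]: "(x,y) \<in> V0 p q \<longleftrightarrow> 0 \<le> x \<and> x \<le> 2 * int q \<and> 0 \<le> y \<and> y \<le> int p"
  unfolding V0_def by auto

context
  fixes p q :: nat and M
  assumes pm: "perfect_matching (V0 p q) (E0 p q) M"
begin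

lemma vvM: "vv x y \<in> M \<Longrightarrow> 0 \<le> x \<and> x \<le> 2 * int q \<and> 0 \<le> y \<and> y < int p \<and> even (x + y)"
  using pm_sub[OF pm] vv_E0 by blast
lemma hhM: "hh x y \<in> M \<Longrightarrow> 0 \<le> x \<and> x < 2 * int q \<and> 0 \<le> y \<and> y \<le> int p"
  using pm_sub[OF pm] hh_E0 by blast

lemma conflict: "e \<in> M \<Longrightarrow> e' \<in> M \<Longrightarrow> v \<in> e \<Longrightarrow> v \<in> e' \<Longrightarrow> v \<in> V0 p q \<Longrightarrow> e = e'"
  using pm_unique[OF pm] by blast

lemma hh_hh: "hh a y \<in> M \<Longrightarrow> hh (a+1) y \<in> M \<Longrightarrow> False"
  using conflict[of "hh a y" "hh (a+1) y" "(a+1,y)"] hhM[of a y] hhM[of "a+1" y]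
  by (auto simp: mem_hh)
lemma hh_vv1: "hh a y \<in> M \<Longrightarrow> vv a z \<in> M \<Longrightarrow> z = y \<or> z = y - 1 \<Longrightarrow> False"
  using conflict[of "hh a y" "vv a z" "(a,y)"] hhM[of a y]
  by (auto simp: mem_hh mem_vv)
lemma hh_vv2: "hh a y \<in> M \<Longrightarrow> vv (a+1) z \<in> M \<Longrightarrow> z = y \<or> z = y - 1 \<Longrightarrow> False"
  using conflict[of "hh a y" "vv (a+1) z" "(a+1,y)"] hhM[of a y]
  by (auto simp: mem_hh mem_vv)

lemma U_sub: "U M y \<subseteq> {0..2 * int q}"
  using vvM unfolding U_def by auto
lemma U_fin: "finite (U M y)"
  using finite_subset[OF U_sub] by auto

lemma level_card:
  assumes y: "0 \<le> y" "y \<le> int p"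
  shows "card {x. 0 \<le> x \<and> x \<le> 2 * int q \<and> even x = b \<and> x \<notin> U M y \<union> U M (y-1)} = card (Hs M y)"
proof -
  let ?W = "U M y \<union> U M (y-1)"
  let ?g = "\<lambda>h::int. if even h = b then h else h + 1"
  have "bij_betw ?g (Hs M y) {x. 0 \<le> x \<and> x \<le> 2 * int q \<and> even x = b \<and> x \<notin> ?W}"
  proof (rule bij_betw_imageI)
    show "inj_on ?g (Hs M y)"
    proof
      fix h1 h2 assume h: "h1 \<in> Hs M y" "h2 \<in> Hs M y" "?g h1 = ?g h2"
      show "h1 = h2"
      proof (cases "even h1 = b")
        case c1: True
        show ?thesis
        proof (cases "even h2 = b")
          case True then show ?thesis using c1 h by simp
        next
          case False
          then have "h1 = h2 + 1" using c1 h by simp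
          then show ?thesis using h hh_hh[of h2 y] unfolding Hs_def by auto
        qed
      next
        case c1: False
        show ?thesis
        proof (cases "even h2 = b")
          case True
          then have "h2 = h1 + 1" using c1 h by simp
          then show ?thesis using h hh_hh[of h1 y] unfolding Hs_def by auto
        next
          case False then show ?thesis using c1 h by simp
        qed
      qed
    qed
  next
    show "?g ` Hs M y = {x. 0 \<le> x \<and> x \<le> 2 * int q \<and> even x = b \<and> x \<notin> ?W}"
    proof (intro equalityI subsetI)
      fix x assume "x \<in> ?g ` Hs M y"
      then obtain h where h: "h \<in> Hs M y" "x = ?g h" by blast
      have hm: "hh h y \<in> M" using h unfolding Hs_def by auto
      have b1: "0 \<le> h" "h < 2 * int q" using hhM[OF hm] by auto
      have "x = h \<or> x = h + 1" using h by auto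
      moreover have "even x = b" using h by (cases "even h = b") auto
      moreover have "x \<notin> ?W"
      proof
        assume "x \<in> ?W"
        then have "vv x y \<in> M \<or> vv x (y-1) \<in> M" unfolding U_def by auto
        then show False using \<open>x = h \<or> x = h + 1\<close> hh_vv1[OF hm, of y] hh_vv1[OF hm, of "y-1"] hh_vv2[OF hm, of y] hh_vv2[OF hm, of "y-1"] by auto
      qed
      ultimately show "x \<in> {x. 0 \<le> x \<and> x \<le> 2 * int q \<and> even x = b \<and> x \<notin> ?W}"
        using b1 by auto
    next
      fix x assume x: "x \<in> {x. 0 \<le> x \<and> x \<le> 2 * int q \<and> even x = b \<and> x \<notin> ?W}"
      then have "(x,y) \<in> V0 p q" using y by auto
      then obtain e where e: "e \<in> M" "(x,y) \<in> e" using pm_exists[OF pm] by blast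
      then have "e \<in> E0 p q" using pm_sub[OF pm] by auto
      note c = E0_cases[OF this e(2)]
      have "vv x y \<notin> M" "vv x (y-1) \<notin> M" using x unfolding U_def by auto
      then have "e = hh (x-1) y \<or> e = hh x y" using c e(1) by blast
      then show "x \<in> ?g ` Hs M y"
      proof
        assume "e = hh (x-1) y"
        then have "x - 1 \<in> Hs M y" "?g (x-1) = x" using e x unfolding Hs_def by auto
        then show ?thesis by (intro image_eqI[where x="x-1"]) auto
      next
        assume "e = hh x y"
        then have "x \<in> Hs M y" "?g x = x" using e x unfolding Hs_def by auto
        then show ?thesis by (intro image_eqI[where x="x"]) auto
      qed
    qed
  qed
  then show ?thesis by (simp add: bij_betw_same_card)
qed

end


lemma card_par: "card {x::int. 0 \<le> x \<and> x \<le> 2 * int q \<and> even x = b} = (if b then q + 1 else q)"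
proof (cases b)
  case True
  have "{x::int. 0 \<le> x \<and> x \<le> 2 * int q \<and> even x = b} = (\<lambda>i. 2 * int i) ` {..q}"
  proof (intro equalityI subsetI)
    fix x assume "x \<in> {x::int. 0 \<le> x \<and> x \<le> 2 * int q \<and> even x = b}"
    then have "x = 2 * int (nat (x div 2))" "nat (x div 2) \<in> {..q}" using True by auto
    then show "x \<in> (\<lambda>i. 2 * int i) ` {..q}" by blast
  qed (use True in auto)
  moreover have "card ((\<lambda>i. 2 * int i) ` {..q}) = q + 1"
    by (subst card_image) (auto simp: inj_on_def)
  ultimately show ?thesis using True by simp
next
  case False
  have "{x::int. 0 \<le> x \<and> x \<le> 2 * int q \<and> even x = b} = (\<lambda>i. 2 * int i + 1) ` {..<q}"
  proof (intro equalityI subsetI)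
    fix x assume "x \<in> {x::int. 0 \<le> x \<and> x \<le> 2 * int q \<and> even x = b}"
    then have xx: "0 \<le> x" "x \<le> 2 * int q" "odd x" using False by auto
    then have a: "x div 2 < int q" "0 \<le> x div 2" "x = 2 * (x div 2) + 1" by presburger+
    then have "x = 2 * int (nat (x div 2)) + 1" "nat (x div 2) \<in> {..<q}" by auto
    then show "x \<in> (\<lambda>i. 2 * int i + 1) ` {..<q}" by blast
  qed (use False in auto)
  moreover have "card ((\<lambda>i. 2 * int i + 1) ` {..<q}) = q"
    by (subst card_image) (auto simp: inj_on_def)
  ultimately show ?thesis using False by simp
qed




context
  fixes p q :: nat and M
  assumes pm: "perfect_matching (V0 p q) (E0 p q) M"
begin

lemma U_par: "x \<in> U M y \<Longrightarrow> even (x + y) \<and> 0 \<le> y \<and> y < int p"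
  using vvM[OF pm] unfolding U_def by auto

lemma level_eq:
  assumes y: "0 \<le> y" "y \<le> int p"
  shows "card {x \<in> U M y \<union> U M (y-1). even x} = card {x \<in> U M y \<union> U M (y-1). odd x} + 1"
proof -
  let ?W = "U M y \<union> U M (y-1)"
  have Wsub: "?W \<subseteq> {0..2 * int q}" using U_sub[OF pm] by blast
  have Wfin: "finite ?W" using U_fin[OF pm] by blast
  have key: "card {x. 0 \<le> x \<and> x \<le> 2 * int q \<and> even x = b} - card {x \<in> ?W. even x = b} = card (Hs M y)"
    for b
  proof -
    have "{x. 0 \<le> x \<and> x \<le> 2 * int q \<and> even x = b \<and> x \<notin> ?W}
        = {x. 0 \<le> x \<and> x \<le> 2 * int q \<and> even x = b} - {x \<in> ?W. even x = b}" by auto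
    moreover have "{x \<in> ?W. even x = b} \<subseteq> {x. 0 \<le> x \<and> x \<le> 2 * int q \<and> even x = b}"
      using Wsub by auto
    moreover have "finite {x \<in> ?W. even x = b}" using Wfin by auto
    ultimately have "card {x. 0 \<le> x \<and> x \<le> 2 * int q \<and> even x = b \<and> x \<notin> ?W}
        = card {x. 0 \<le> x \<and> x \<le> 2 * int q \<and> even x = b} - card {x \<in> ?W. even x = b}"
      by (simp add: card_Diff_subset)
    then show ?thesis using level_card[OF pm y] by simp
  qed
  have le: "card {x \<in> ?W. even x = b} \<le> card {x. 0 \<le> x \<and> x \<le> 2 * int q \<and> even x = b}" for b
  proof (rule card_mono)
    show "finite {x. 0 \<le> x \<and> x \<le> 2 * int q \<and> even x = b}"
      by (rule finite_subset[of _ "{0..2 * int q}"]) auto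
  qed (use Wsub in auto)
  note k1 = key[of True] and k2 = key[of False]
  note l1 = le[of True] and l2 = le[of False]
  have e1: "{x \<in> ?W. even x = True} = {x \<in> ?W. even x}" by simp
  have e2: "{x \<in> ?W. even x = False} = {x \<in> ?W. odd x}" by simp
  show ?thesis using k1 k2 l1 l2 unfolding card_par e1 e2 by simp
qed

lemma U_empty: "\<not> (0 \<le> y \<and> y < int p) \<Longrightarrow> U M y = {}"
  using U_par by blast

lemma split_even: "even y \<Longrightarrow> {x \<in> U M y \<union> U M (y-1). even x} = U M y \<and> {x \<in> U M y \<union> U M (y-1). odd x} = U M (y-1)"
  using U_par[of _ y] U_par[of _ "y-1"] by auto

lemma split_odd: "odd y \<Longrightarrow> {x \<in> U M y \<union> U M (y-1). even x} = U M (y-1) \<and> {x \<in> U M y \<union> U M (y-1). odd x} = U M y"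
  using U_par[of _ y] U_par[of _ "y-1"] by auto

lemma U_card: "n < p \<Longrightarrow> card (U M (int n)) = (if even n then 1 else 0)"
proof (induction n)
  case 0
  have "U M (0 - 1) = {}" by (rule U_empty) simp
  have l: "card {x \<in> U M 0 \<union> U M (0-1). even x} = card {x \<in> U M 0 \<union> U M (0-1). odd x} + 1"
    using level_eq[of 0] by simp
  have s: "{x \<in> U M 0 \<union> U M (0-1). even x} = U M 0" "{x \<in> U M 0 \<union> U M (0-1). odd x} = U M (0-1)"
    using split_even[of 0] by simp_all
  have l2: "card (U M 0) = card (U M (0-1)) + 1" using l unfolding s .
  show ?case using l2 \<open>U M (0 - 1) = {}\<close> by simp
next
  case (Suc n)
  have y: "0 \<le> int (Suc n)" "int (Suc n) \<le> int p" using Suc by auto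
  have ih: "card (U M (int n)) = (if even n then 1 else 0)" using Suc by auto
  have m: "int (Suc n) - 1 = int n" by simp
  show ?case
  proof (cases "even (Suc n)")
    case True
    then have "even (int (Suc n))" by simp
    from split_even[OF this] level_eq[OF y] ih True show ?thesis unfolding m by simp
  next
    case False
    then have "odd (int (Suc n))" by simp
    from split_odd[OF this] level_eq[OF y] ih False show ?thesis unfolding m by simp
  qed
qed

lemma hh_char:
  assumes "0 \<le> x" "x < 2 * int q" "0 \<le> y" "y \<le> int p"
  shows "hh x y \<in> M \<longleftrightarrow> hh (x-1) y \<notin> M \<and> x \<notin> U M y \<and> x \<notin> U M (y-1)"
proof
  assume h: "hh x y \<in> M"
  show "hh (x-1) y \<notin> M \<and> x \<notin> U M y \<and> x \<notin> U M (y-1)"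
    using hh_hh[OF pm, of "x-1" y] h hh_vv1[OF pm h, of y] hh_vv1[OF pm h, of "y-1"]
    unfolding U_def by auto
next
  assume a: "hh (x-1) y \<notin> M \<and> x \<notin> U M y \<and> x \<notin> U M (y-1)"
  have "(x,y) \<in> V0 p q" using assms by auto
  then obtain e where e: "e \<in> M" "(x,y) \<in> e" using pm_exists[OF pm] by blast
  then have "e \<in> E0 p q" using pm_sub[OF pm] by auto
  note c = E0_cases[OF this e(2)]
  have "vv x y \<notin> M" "vv x (y-1) \<notin> M" using a unfolding U_def by auto
  then show "hh x y \<in> M" using c e(1) a by blast
qed

end

lemma determined:
  assumes pm: "perfect_matching (V0 p q) (E0 p q) M" and pm': "perfect_matching (V0 p q) (E0 p q) M'"
    and U: "\<And>y. U M y = U M' y"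
  shows "M = M'"
proof -
  have H: "hh (int n) y \<in> M \<longleftrightarrow> hh (int n) y \<in> M'" if y: "0 \<le> y" "y \<le> int p" for n y
  proof (induction n)
    case 0
    show ?case
    proof (cases "0 < 2 * int q")
      case True
      have "hh (-1) y \<notin> M" "hh (-1) y \<notin> M'" using hhM[OF pm] hhM[OF pm'] by force+
      then show ?thesis using hh_char[OF pm, of 0 y] hh_char[OF pm', of 0 y] True y U by simp
    next
      case False
      then show ?thesis using hhM[OF pm] hhM[OF pm'] by force
    qed
  next
    case (Suc n)
    show ?case
    proof (cases "int (Suc n) < 2 * int q")
      case True
      have m: "int (Suc n) - 1 = int n" by simp
      show ?thesis using hh_char[OF pm, of "int (Suc n)" y] hh_char[OF pm', of "int (Suc n)" y] True y U Suc
        unfolding m by simp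
    next
      case False
      then show ?thesis using hhM[OF pm, of "int (Suc n)" y] hhM[OF pm', of "int (Suc n)" y] by auto
    qed
  qed
  have sub: "A \<subseteq> B"
    if pA: "perfect_matching (V0 p q) (E0 p q) A" and pB: "perfect_matching (V0 p q) (E0 p q) B"
      and UU: "\<And>y. U A y = U B y"
      and HH: "\<And>n y. 0 \<le> y \<Longrightarrow> y \<le> int p \<Longrightarrow> hh (int n) y \<in> A \<longleftrightarrow> hh (int n) y \<in> B"
    for A B
  proof
    fix e assume e: "e \<in> A"
    then have "e \<in> E0 p q" using pm_sub[OF pA] by auto
    then consider (h) x y where "e = hh x y" "0 \<le> x" "0 \<le> y" "y \<le> int p"
      | (v) x y where "e = vv x y"
      unfolding E0_def by auto
    then show "e \<in> B"
    proof cases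
      case h
      then have "x = int (nat x)" by simp
      then show ?thesis using HH[of y "nat x"] h e by metis
    next
      case v
      then show ?thesis using UU[of y] e unfolding U_def by auto
    qed
  qed
  show ?thesis
    using sub[OF pm pm' U H] sub[OF pm' pm U[symmetric]] H by blast
qed




definition Sv :: "nat \<Rightarrow> nat \<Rightarrow> (int \<times> int) set set" where
  "Sv p q = {vv x y | x y. 0 \<le> x \<and> x \<le> 2 * int q \<and> 0 \<le> y \<and> y < int p \<and> even x \<and> even y}"

lemma Sv_sub: "Sv p q \<subseteq> E0 p q"
  unfolding Sv_def using vv_E0 by fastforce

lemma Sv_card:
  assumes "odd p"
  shows "card (Sv p q) = (p + 1) div 2 * (q + 1)"
proof -
  have "Sv p q = (\<lambda>(i,j). vv (2 * int i) (2 * int j)) ` ({..q} \<times> {..<(p+1) div 2})"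
  proof (intro equalityI subsetI)
    fix e assume "e \<in> Sv p q"
    then obtain x y where xy: "e = vv x y" "0 \<le> x" "x \<le> 2 * int q" "0 \<le> y" "y < int p" "even x" "even y"
      unfolding Sv_def by auto
    have a: "x = 2 * int (nat (x div 2))" "y = 2 * int (nat (y div 2))" using xy by auto
    have b: "nat (x div 2) \<le> q" using xy by auto
    have i: "int ((p+1) div 2) = (int p + 1) div 2" by (simp add: zdiv_int)
    have "y div 2 < (int p + 1) div 2" using xy by presburger
    then have c: "nat (y div 2) < (p+1) div 2" using i xy by linarith
    show "e \<in> (\<lambda>(i,j). vv (2 * int i) (2 * int j)) ` ({..q} \<times> {..<(p+1) div 2})"
      using a b c xy(1) by (intro image_eqI[where x="(nat (x div 2), nat (y div 2))"]) auto
  next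
    fix e assume "e \<in> (\<lambda>(i,j). vv (2 * int i) (2 * int j)) ` ({..q} \<times> {..<(p+1) div 2})"
    then obtain i j where ij: "e = vv (2 * int i) (2 * int j)" "i \<le> q" "j < (p+1) div 2" by auto
    have i: "int ((p+1) div 2) = (int p + 1) div 2" by (simp add: zdiv_int)
    have "int j < (int p + 1) div 2" using ij(3) i by linarith
    then have "2 * int j < int p" using assms by presburger
    then show "e \<in> Sv p q" unfolding Sv_def using ij by fastforce
  qed
  moreover have "inj_on (\<lambda>(i,j). vv (2 * int i) (2 * int j)) ({..q} \<times> {..<(p+1) div 2})"
    by (auto simp: inj_on_def)
  ultimately show ?thesis by (simp add: card_image card_cartesian_product)
qed

lemma Sv_forces:
  assumes p: "odd p" and pm: "perfect_matching (V0 p q) (E0 p q) M"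
    and pm': "perfect_matching (V0 p q) (E0 p q) M'" and sub: "Sv p q \<inter> M \<subseteq> M'"
  shows "M' = M"
proof -
  have "U M y = U M' y" for y
  proof (cases "0 \<le> y \<and> y < int p")
    case False
    then show ?thesis using U_empty[OF pm] U_empty[OF pm'] by metis
  next
    case True
    then obtain n where n: "y = int n" "n < p" by (metis nonneg_int_cases of_nat_less_iff)
    show ?thesis
    proof (cases "even n")
      case True
      have "U M y \<subseteq> U M' y"
      proof
        fix x assume x: "x \<in> U M y"
        then have "vv x y \<in> M" unfolding U_def by auto
        moreover have "vv x y \<in> Sv p q"
          using U_par[OF pm x] U_sub[OF pm, of y] x True n unfolding Sv_def by fastforce
        ultimately show "x \<in> U M' y" using sub unfolding U_def by auto
      qed
      moreover have "card (U M y) = card (U M' y)" using U_card[OF pm n(2)] U_card[OF pm' n(2)] n by simp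
      ultimately show ?thesis using U_fin[OF pm'] by (metis card_subset_eq)
    next
      case False
      then have "card (U M y) = 0" "card (U M' y) = 0" using U_card[OF pm n(2)] U_card[OF pm' n(2)] n by simp_all
      then show ?thesis using U_fin[OF pm] U_fin[OF pm'] by simp
    qed
  qed
  then show ?thesis using determined[OF pm pm'] by metis
qed

lemma Sv_cfs:
  assumes "odd p"
  shows "complete_forcing_set (V0 p q) (E0 p q) (Sv p q)"
  unfolding complete_forcing_set_def forcing_set_def
  using Sv_sub Sv_forces[OF assms] by blast




definition fp :: "(int \<Rightarrow> int) \<Rightarrow> int \<times> int \<Rightarrow> int \<times> int" where
  "fp c v = (case v of (x,y) \<Rightarrow> let k = c (y div 2) in
     if x = 2*k then (x, if even y then y+1 else y-1)
     else if x < 2*k then (if even x then (x+1,y) else (x-1,y))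
     else (if odd x then (x+1,y) else (x-1,y)))"

definition Mf :: "(int \<Rightarrow> int) \<Rightarrow> nat \<Rightarrow> nat \<Rightarrow> (int \<times> int) set set" where
  "Mf c p q = (\<lambda>v. {v, fp c v}) ` V0 p q"

lemma pm_inv:
  assumes "\<And>v. v \<in> V \<Longrightarrow> f v \<in> V" "\<And>v. v \<in> V \<Longrightarrow> f (f v) = v" "\<And>v. v \<in> V \<Longrightarrow> {v, f v} \<in> E"
  shows "perfect_matching V E ((\<lambda>v. {v, f v}) ` V)"
  unfolding perfect_matching_def
proof (intro conjI ballI)
  show "(\<lambda>v. {v, f v}) ` V \<subseteq> E" using assms(3) by auto
next
  fix v assume v: "v \<in> V"
  show "\<exists>!e. e \<in> (\<lambda>v. {v, f v}) ` V \<and> v \<in> e"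
  proof (rule ex1I[of _ "{v, f v}"])
    show "{v, f v} \<in> (\<lambda>v. {v, f v}) ` V \<and> v \<in> {v, f v}" using v by auto
  next
    fix e assume "e \<in> (\<lambda>v. {v, f v}) ` V \<and> v \<in> e"
    then obtain w where w: "w \<in> V" "e = {w, f w}" "v \<in> e" by auto
    then have "v = w \<or> v = f w" by auto
    then show "e = {v, f v}"
    proof
      assume "v = f w" then have "f v = w" using assms(2) w by auto
      then show ?thesis using w \<open>v = f w\<close> by auto
    qed (use w in auto)
  qed
qed

lemma E0_pair:
  assumes "(y' = y \<and> x' = x + 1 \<and> 0 \<le> x \<and> x < 2 * int q \<and> 0 \<le> y \<and> y \<le> int p)
    \<or> (x' = x \<and> y' = y + 1 \<and> 0 \<le> x \<and> x \<le> 2 * int q \<and> 0 \<le> y \<and> y < int p \<and> even (x + y))"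
  shows "{(x,y),(x',y')} \<in> E0 p q" "{(x',y'),(x,y)} \<in> E0 p q"
proof -
  show "{(x,y),(x',y')} \<in> E0 p q"
    using assms hh_E0[of x y p q] vv_E0[of x y p q] unfolding hh_def vv_def by auto
  then show "{(x',y'),(x,y)} \<in> E0 p q" by (simp add: insert_commute)
qed

definition validc :: "nat \<Rightarrow> (int \<Rightarrow> int) \<Rightarrow> bool" where
  "validc q c \<longleftrightarrow> (\<forall>j. 0 \<le> c j \<and> c j \<le> int q)"

lemma fp_props:
  assumes p: "odd p" and c: "validc q c" and v: "v \<in> V0 p q"
  shows "fp c v \<in> V0 p q \<and> fp c (fp c v) = v \<and> {v, fp c v} \<in> E0 p q"
proof -
  obtain x y where xy: "v = (x,y)" by (cases v)
  define k where "k = c (y div 2)"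
  have k: "0 \<le> k" "k \<le> int q" using c unfolding validc_def k_def by auto
  have b: "0 \<le> x" "x \<le> 2 * int q" "0 \<le> y" "y \<le> int p" using v xy by auto
  have pp: "odd (int p)" using p by simp
  note defs = fp_def Let_def k_def[symmetric]
  have hv: "\<And>a b. {(a,b),(a,b+1)} = vv a b" "\<And>a b. {(a,b+1),(a,b)} = vv a b"
    "\<And>a b. {(a,b),(a+1,b)} = hh a b" "\<And>a b. {(a+1,b),(a,b)} = hh a b"
    unfolding vv_def hh_def by auto
  consider (v1) "x = 2*k" "even y" | (v2) "x = 2*k" "odd y" | (a1) "x < 2*k" "even x" | (a2) "x < 2*k" "odd x"
    | (b1) "x > 2*k" "odd x" | (b2) "x > 2*k" "even x" by linarith
  then show ?thesis
  proof cases
    case v1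
    have "y < int p" using b pp v1 by (metis antisym_conv1)
    moreover have "(y+1) div 2 = y div 2" using v1 by presburger
    ultimately have f1: "fp c (x,y) = (x,y+1)" "fp c (x,y+1) = (x,y)" using v1 by (simp_all add: defs)
    have "{(x,y),(x,y+1)} \<in> E0 p q" unfolding hv vv_E0 using v1 b \<open>y < int p\<close> k by auto
    then show ?thesis using f1 b \<open>y < int p\<close> unfolding xy by auto
  next
    case v2
    have "(y-1) div 2 = y div 2" using v2 by presburger
    moreover have "0 < y" using v2 b by (cases "y = 0") auto
    ultimately have f1: "fp c (x,y) = (x,y-1)" "fp c (x,y-1) = (x,y)" using v2 by (simp_all add: defs)
    have e: "{(x,y),(x,y-1)} = vv x (y-1)" unfolding vv_def by auto
    have "even (x + (y - 1))" using v2 by presburger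
    then have "{(x,y),(x,y-1)} \<in> E0 p q" unfolding e vv_E0 using v2 b \<open>0 < y\<close> k by auto
    then show ?thesis using f1 b \<open>0 < y\<close> unfolding xy by auto
  next
    case a1
    have "x + 1 < 2 * k" using a1 by presburger
    then have f1: "fp c (x,y) = (x+1,y)" "fp c (x+1,y) = (x,y)" using a1 by (simp_all add: defs)
    have "{(x,y),(x+1,y)} \<in> E0 p q" unfolding hv hh_E0 using a1 b k by auto
    then show ?thesis using f1 b a1 k unfolding xy by auto
  next
    case a2
    have "x \<ge> 1" using a2 b by presburger
    then have f1: "fp c (x,y) = (x-1,y)" "fp c (x-1,y) = (x,y)" using a2 by (simp_all add: defs)
    have e: "{(x,y),(x-1,y)} = hh (x-1) y" unfolding hh_def by auto
    have "{(x,y),(x-1,y)} \<in> E0 p q" unfolding e hh_E0 using a2 b k \<open>x \<ge> 1\<close> by auto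
    then show ?thesis using f1 b a2 k \<open>x \<ge> 1\<close> unfolding xy by auto
  next
    case b1
    have "x < 2 * int q" using b1 b by presburger
    then have f1: "fp c (x,y) = (x+1,y)" "fp c (x+1,y) = (x,y)" using b1 by (simp_all add: defs)
    have "{(x,y),(x+1,y)} \<in> E0 p q" unfolding hv hh_E0 using b1 b k \<open>x < 2 * int q\<close> by auto
    then show ?thesis using f1 b b1 k \<open>x < 2 * int q\<close> unfolding xy by auto
  next
    case b2
    have "x - 1 > 2 * k" using b2 by presburger
    then have f1: "fp c (x,y) = (x-1,y)" "fp c (x-1,y) = (x,y)" using b2 by (simp_all add: defs)
    have e: "{(x,y),(x-1,y)} = hh (x-1) y" unfolding hh_def by auto
    have "{(x,y),(x-1,y)} \<in> E0 p q" unfolding e hh_E0 using b2 b k \<open>x - 1 > 2 * k\<close> by auto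
    then show ?thesis using f1 b b2 k \<open>x - 1 > 2 * k\<close> unfolding xy by auto
  qed
qed




lemma Mf_pm:
  assumes "odd p" "validc q c"
  shows "perfect_matching (V0 p q) (E0 p q) (Mf c p q)"
  unfolding Mf_def using fp_props[OF assms] by (intro pm_inv) auto

lemma fp_same: "c1 (y div 2) = c2 (y div 2) \<Longrightarrow> fp c1 (x,y) = fp c2 (x,y)"
  unfolding fp_def by simp

lemma fp_diff_down:
  assumes "fp c1 (x,y) \<noteq> fp c2 (x,y)" "c1 (y div 2) = K" "c2 (y div 2) = K - 1"
  shows "(x = 2*K-2 \<and> fp c1 (x,y) = (x+1,y)) \<or> (x = 2*K-1 \<and> fp c1 (x,y) = (x-1,y))
    \<or> (x = 2*K \<and> fp c1 (x,y) = (x, if even y then y+1 else y-1))"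
proof -
  consider "x < 2*K-2" | "x = 2*K-2" | "x = 2*K-1" | "x = 2*K" | "x > 2*K" by linarith
  then show ?thesis
  proof cases
    case 1 then show ?thesis using assms unfolding fp_def Let_def by auto
  next
    case 2
    have "even x" using 2 by presburger
    then show ?thesis using 2 assms unfolding fp_def Let_def by auto
  next
    case 3
    have "odd x" using 3 by presburger
    then show ?thesis using 3 assms unfolding fp_def Let_def by auto
  next
    case 4 then show ?thesis using assms unfolding fp_def Let_def by auto
  next
    case 5 then show ?thesis using assms unfolding fp_def Let_def by auto
  qed
qed

lemma fp_diff_up:
  assumes "fp c1 (x,y) \<noteq> fp c2 (x,y)" "c1 (y div 2) = K" "c2 (y div 2) = K + 1"
  shows "(x = 2*K \<and> fp c1 (x,y) = (x, if even y then y+1 else y-1))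
    \<or> (x = 2*K+1 \<and> fp c1 (x,y) = (x+1,y)) \<or> (x = 2*K+2 \<and> fp c1 (x,y) = (x-1,y))"
proof -
  consider "x < 2*K" | "x = 2*K" | "x = 2*K+1" | "x = 2*K+2" | "x > 2*K+2" by linarith
  then show ?thesis
  proof cases
    case 1 then show ?thesis using assms unfolding fp_def Let_def by auto
  next
    case 2 then show ?thesis using assms unfolding fp_def Let_def by auto
  next
    case 3
    have "odd x" using 3 by presburger
    then show ?thesis using 3 assms unfolding fp_def Let_def by auto
  next
    case 4
    have "even x" using 4 by presburger
    then show ?thesis using 4 assms unfolding fp_def Let_def by auto
  next
    case 5 then show ?thesis using assms unfolding fp_def Let_def by auto
  qed
qed

definition ci :: "nat \<Rightarrow> nat \<Rightarrow> int \<Rightarrow> int" where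
  "ci i k = (\<lambda>j. if j = int i then int k else 0)"

lemma ci_valid: "k \<le> q \<Longrightarrow> validc q (ci i k)"
  unfolding validc_def ci_def by auto

definition T :: "nat \<Rightarrow> nat \<Rightarrow> (int \<times> int) set set" where
  "T i k = (if k = 0 then {vv 0 (2 * int i), hh 1 (2 * int i), hh 1 (2 * int i + 1)}
            else {vv (2 * int k) (2 * int i), hh (2 * int k - 2) (2 * int i), hh (2 * int k - 2) (2 * int i + 1)})"

lemma Mf_diff:
  assumes "e \<in> Mf a p q - Mf b p q"
  obtains x y where "(x,y) \<in> V0 p q" "e = {(x,y), fp a (x,y)}" "fp a (x,y) \<noteq> fp b (x,y)"
proof -
  obtain v where v: "v \<in> V0 p q" "e = {v, fp a v}" using assms unfolding Mf_def by auto
  have "fp a v \<noteq> fp b v"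
  proof
    assume "fp a v = fp b v"
    then have "e \<in> Mf b p q" using v unfolding Mf_def by auto
    then show False using assms by auto
  qed
  then show ?thesis using that v by (cases v) auto
qed

lemma ydiv: "y div 2 = int i \<Longrightarrow> y = 2 * int i \<or> y = 2 * int i + 1"
  by presburger

lemma diff_pos:
  assumes "1 \<le> k"
  shows "Mf (ci i k) p q - Mf (ci i (k-1)) p q \<subseteq> T i k"
proof
  fix e assume "e \<in> Mf (ci i k) p q - Mf (ci i (k-1)) p q"
  then obtain x y where xy: "(x,y) \<in> V0 p q" "e = {(x,y), fp (ci i k) (x,y)}"
    "fp (ci i k) (x,y) \<noteq> fp (ci i (k-1)) (x,y)" by (rule Mf_diff)
  have yi: "y div 2 = int i"
  proof (rule ccontr)
    assume "y div 2 \<noteq> int i"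
    then have "fp (ci i k) (x,y) = fp (ci i (k-1)) (x,y)" by (intro fp_same) (simp add: ci_def)
    then show False using xy by simp
  qed
  have c1: "ci i k (y div 2) = int k" and c2: "ci i (k-1) (y div 2) = int k - 1"
    using yi assms by (auto simp: ci_def)
  have ty: "y = 2 * int i \<or> y = 2 * int i + 1" using ydiv[OF yi] .
  from fp_diff_down[OF xy(3) c1 c2] show "e \<in> T i k"
  proof (elim disjE conjE)
    assume "x = 2 * int k - 2" "fp (ci i k) (x, y) = (x + 1, y)"
    then have "e = hh (2 * int k - 2) y" using xy unfolding hh_def by auto
    then show ?thesis using ty assms unfolding T_def by auto
  next
    assume "x = 2 * int k - 1" "fp (ci i k) (x, y) = (x - 1, y)"
    then have "e = hh (2 * int k - 2) y" using xy unfolding hh_def by auto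
    then show ?thesis using ty assms unfolding T_def by auto
  next
    assume a: "x = 2 * int k" "fp (ci i k) (x, y) = (x, if even y then y + 1 else y - 1)"
    have "e = vv (2 * int k) (2 * int i)" using ty
    proof
      assume "y = 2 * int i" then show ?thesis using a xy unfolding vv_def by auto
    next
      assume "y = 2 * int i + 1" then show ?thesis using a xy unfolding vv_def by auto
    qed
    then show ?thesis using assms unfolding T_def by auto
  qed
qed

lemma diff_zero:
  shows "Mf (ci i 0) p q - Mf (ci i 1) p q \<subseteq> T i 0"
proof
  fix e assume "e \<in> Mf (ci i 0) p q - Mf (ci i 1) p q"
  then obtain x y where xy: "(x,y) \<in> V0 p q" "e = {(x,y), fp (ci i 0) (x,y)}"
    "fp (ci i 0) (x,y) \<noteq> fp (ci i 1) (x,y)" by (rule Mf_diff)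
  have yi: "y div 2 = int i"
  proof (rule ccontr)
    assume "y div 2 \<noteq> int i"
    then have "fp (ci i 0) (x,y) = fp (ci i 1) (x,y)" by (intro fp_same) (simp add: ci_def)
    then show False using xy by simp
  qed
  have c1: "ci i 0 (y div 2) = 0" and c2: "ci i 1 (y div 2) = 0 + 1"
    using yi by (auto simp: ci_def)
  have ty: "y = 2 * int i \<or> y = 2 * int i + 1" using ydiv[OF yi] .
  from fp_diff_up[OF xy(3) c1 c2] show "e \<in> T i 0"
  proof (elim disjE conjE)
    assume a: "x = 2 * 0" "fp (ci i 0) (x, y) = (x, if even y then y + 1 else y - 1)"
    have "e = vv 0 (2 * int i)" using ty
    proof
      assume "y = 2 * int i" then show ?thesis using a xy unfolding vv_def by auto
    next
      assume "y = 2 * int i + 1" then show ?thesis using a xy unfolding vv_def by auto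
    qed
    then show ?thesis unfolding T_def by auto
  next
    assume "x = 2 * 0 + 1" "fp (ci i 0) (x, y) = (x + 1, y)"
    then have "e = hh 1 y" using xy unfolding hh_def by auto
    then show ?thesis using ty unfolding T_def by auto
  next
    assume "x = 2 * 0 + 2" "fp (ci i 0) (x, y) = (x - 1, y)"
    then have "e = hh 1 y" using xy unfolding hh_def by auto
    then show ?thesis using ty unfolding T_def by auto
  qed
qed




lemma vert_in:
  assumes "2 * int i < int p" "k \<le> q"
  shows "vv (2 * int k) (2 * int i) \<in> Mf (ci i k) p q"
proof -
  have "fp (ci i k) (2 * int k, 2 * int i) = (2 * int k, 2 * int i + 1)"
    unfolding fp_def ci_def Let_def by simp
  moreover have "(2 * int k, 2 * int i) \<in> V0 p q" using assms by auto
  ultimately show ?thesis unfolding Mf_def vv_def by force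
qed

lemma vert_notin:
  assumes p: "odd p" and c: "validc q c" and ck: "c (int i) \<noteq> int k"
    and b: "2 * int i < int p" "k \<le> q"
  shows "vv (2 * int k) (2 * int i) \<notin> Mf c p q"
proof
  assume a: "vv (2 * int k) (2 * int i) \<in> Mf c p q"
  let ?v = "(2 * int k, 2 * int i)"
  have v: "?v \<in> V0 p q" using b by auto
  have "{?v, fp c ?v} \<in> Mf c p q" using v unfolding Mf_def by auto
  then have "vv (2 * int k) (2 * int i) = {?v, fp c ?v}"
    using pm_unique[OF Mf_pm[OF p c] v a] unfolding vv_def by auto
  then have "fp c ?v = (2 * int k, 2 * int i + 1)" unfolding vv_def by (auto simp: doubleton_eq_iff)
  moreover have "fst (fp c ?v) \<noteq> 2 * int k \<or> snd (fp c ?v) = 2 * int i"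
    using ck unfolding fp_def Let_def by auto
  ultimately show False by simp
qed

lemma hits:
  assumes p: "odd p" and q: "1 \<le> q" and S: "complete_forcing_set (V0 p q) (E0 p q) S"
    and i: "2 * int i < int p" and k: "k \<le> q"
  shows "S \<inter> T i k \<noteq> {}"
proof
  assume emp: "S \<inter> T i k = {}"
  define a where "a = ci i k"
  define b where "b = (if k = 0 then ci i 1 else ci i (k-1))"
  have va: "validc q a" unfolding a_def using k by (rule ci_valid)
  have vb: "validc q b" unfolding b_def using k q by (auto intro: ci_valid)
  have diff: "Mf a p q - Mf b p q \<subseteq> T i k"
    using diff_zero[of i p q] diff_pos[of k i p q] unfolding a_def b_def by (cases "k = 0") auto
  have pa: "perfect_matching (V0 p q) (E0 p q) (Mf a p q)" by (rule Mf_pm[OF p va])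
  have pb: "perfect_matching (V0 p q) (E0 p q) (Mf b p q)" by (rule Mf_pm[OF p vb])
  have "S \<inter> Mf a p q \<subseteq> Mf b p q" using diff emp by blast
  then have eq: "Mf b p q = Mf a p q"
    using S pa pb unfolding complete_forcing_set_def forcing_set_def by blast
  have "vv (2 * int k) (2 * int i) \<in> Mf a p q" unfolding a_def by (rule vert_in[OF i k])
  moreover have "vv (2 * int k) (2 * int i) \<notin> Mf b p q"
    by (rule vert_notin[OF p vb _ i k]) (auto simp: b_def ci_def)
  ultimately show False using eq by simp
qed

lemma T_disj: "e \<in> T i k \<Longrightarrow> e \<in> T i' k' \<Longrightarrow> i = i' \<and> k = k'"
  unfolding T_def by (auto split: if_splits; presburger)

lemma V0_fin: "finite (V0 p q)"
  by (rule finite_subset[of _ "{0..2 * int q} \<times> {0..int p}"]) (auto simp: V0_def)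

lemma E0_fin: "finite (E0 p q)"
proof -
  have "E0 p q \<subseteq> Pow (V0 p q)" unfolding E0_def hh_def vv_def V0_def by auto
  then show ?thesis using V0_fin by (metis finite_Pow_iff finite_subset)
qed

lemma lower:
  assumes p: "odd p" and q: "1 \<le> q" and S: "complete_forcing_set (V0 p q) (E0 p q) S"
  shows "(p + 1) div 2 * (q + 1) \<le> card S"
proof -
  let ?I = "{..<(p+1) div 2} \<times> {..q}"
  define f where "f = (\<lambda>(i,k). SOME e. e \<in> S \<inter> T i k)"
  have fi: "f (i,k) \<in> S \<inter> T i k" if "(i,k) \<in> ?I" for i k
  proof -
    have ii: "int ((p+1) div 2) = (int p + 1) div 2" by (simp add: zdiv_int)
    have "int i < (int p + 1) div 2" using that ii by auto
    then have "2 * int i < int p" using p by presburger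
    then have "S \<inter> T i k \<noteq> {}" using hits[OF p q S] that by auto
    then obtain e where "e \<in> S \<inter> T i k" by blast
    then have "(SOME e. e \<in> S \<inter> T i k) \<in> S \<inter> T i k" by (rule someI)
    then show ?thesis unfolding f_def by simp
  qed
  have "inj_on f ?I"
  proof (rule inj_onI)
    fix u v assume u: "u \<in> ?I" and v: "v \<in> ?I" and e: "f u = f v"
    obtain i k where u': "u = (i,k)" by (cases u)
    obtain i' k' where v': "v = (i',k')" by (cases v)
    have "f u \<in> T i k" using fi u u' by auto
    moreover have "f v \<in> T i' k'" using fi v v' by auto
    ultimately have "f u \<in> T i k" "f u \<in> T i' k'" using e by auto
    then show "u = v" using T_disj u' v' by auto
  qed
  moreover have "f ` ?I \<subseteq> S" using fi by auto
  moreover have "finite S" using S E0_fin unfolding complete_forcing_set_def by (metis finite_subset)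
  ultimately have "card ?I \<le> card S" by (rule card_inj_on_le)
  then show ?thesis by (simp add: card_cartesian_product)
qed

theorem mainTheorem11:
  fixes p q :: nat
  assumes "odd p" and "q \<ge> 2"
  shows "cf (Rp_verts p q) (Rp_edges p q) = (p + 1) div 2 * (q + 1)"
  unfolding Rp_verts_eq[OF assms] Rp_edges_eq[OF assms] cf_def
proof (rule Least_equality)
  show "\<exists>S. complete_forcing_set (V0 p q) (E0 p q) S \<and> card S = (p + 1) div 2 * (q + 1)"
    using Sv_cfs[OF assms(1)] Sv_card[OF assms(1)] by blast
next
  fix n assume "\<exists>S. complete_forcing_set (V0 p q) (E0 p q) S \<and> card S = n"
  then show "(p + 1) div 2 * (q + 1) \<le> n" using lower[OF assms(1)] assms(2) by fastforce
qed


end
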